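(* There is an absolute constant $c>0$ such that, for every $n\ge 2$, there exists an $n\times n$ $(0,1)$-matrix $A$ with the following property. Every depth-$2$ circuit computing $f_A(\vec x)=A\vec x$ over $GF(2)$ in which every middle node computes a linear boolean function has at least $c\,n^2/\log n$ wires. The output nodes of such a circuit may compute arbitrary boolean functions.
   Context: A depth-$2$ circuit has $n$ input nodes $x_1,\dots,x_n$, a set of middle nodes, and $n$ output nodes $y_1,\dots,y_n$. Wires go only from inputs to middle nodes, from middle nodes to outputs, or from inputs directly to outputs. Each non-input node may compute an arbitrary boolean function of the values at its in-neighbours, with no restriction on fanin or fanout. The circuit computes $f=(f_1,\dots,f_n)$ if the function at $y_i$ equals $f_i$ for all $i$. A boolean function is linear if it is the sum modulo $2$ of some subset of its arguments (the empty sum is allowed) or the negation of such a sum. The number of wires is the number of edges of the circuit. *)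

theory Defs
  imports Main Complex_Main
begin

text \<open>A depth-2 circuit with inputs x_0..x_{n-1} (indices < n), middle nodes
  indexed by 0..<mid, and outputs y_0..y_{n-1} (indices < n).
  inmid i j: wire from input i to middle node j;
  midout j k: wire from middle node j to output k;
  inout i k: wire from input i directly to output k;
  midfun j x: value of middle node j on input assignment x;
  outfun k x v: value of output k given input assignment x and middle values v.\<close>

record d2circ =
  mid    :: nat
  inmid  :: "nat \<Rightarrow> nat \<Rightarrow> bool"
  midout :: "nat \<Rightarrow> nat \<Rightarrow> bool"
  inout  :: "nat \<Rightarrow> nat \<Rightarrow> bool"
  midfun :: "nat \<Rightarrow> (nat \<Rightarrow> bool) \<Rightarrow> bool"
  outfun :: "nat \<Rightarrow> (nat \<Rightarrow> bool) \<Rightarrow> (nat \<Rightarrow> bool) \<Rightarrow> bool"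

definition parity :: "nat set \<Rightarrow> (nat \<Rightarrow> bool) \<Rightarrow> bool" where
  "parity S x = odd (card {i \<in> S. x i})"

definition linear_middle :: "nat \<Rightarrow> d2circ \<Rightarrow> bool" where
  "linear_middle n C \<longleftrightarrow>
     (\<forall>j < mid C. \<exists>S b. S \<subseteq> {i. i < n \<and> inmid C i j} \<and>
        (\<forall>x. midfun C j x = (b \<noteq> parity S x)))"

text \<open>Each output computes an arbitrary function of the values at its in-neighbours.\<close>
definition outputs_local :: "nat \<Rightarrow> d2circ \<Rightarrow> bool" where
  "outputs_local n C \<longleftrightarrow>
     (\<forall>k < n. \<forall>x x' v v'.
        (\<forall>i < n. inout C i k \<longrightarrow> x i = x' i) \<longrightarrow>
        (\<forall>j < mid C. midout C j k \<longrightarrow> v j = v' j) \<longrightarrow>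
        outfun C k x v = outfun C k x' v')"

definition matvec :: "nat \<Rightarrow> (nat \<Rightarrow> nat \<Rightarrow> bool) \<Rightarrow> (nat \<Rightarrow> bool) \<Rightarrow> nat \<Rightarrow> bool" where
  "matvec n A x k = parity {i. i < n \<and> A k i} x"

definition computes :: "nat \<Rightarrow> d2circ \<Rightarrow> (nat \<Rightarrow> nat \<Rightarrow> bool) \<Rightarrow> bool" where
  "computes n C A \<longleftrightarrow> outputs_local n C \<and>
     (\<forall>x. \<forall>k < n. outfun C k x (\<lambda>j. midfun C j x) = matvec n A x k)"

definition wires :: "nat \<Rightarrow> d2circ \<Rightarrow> nat" where
  "wires n C = card {(i, j). i < n \<and> j < mid C \<and> inmid C i j}
             + card {(j, k). j < mid C \<and> k < n \<and> midout C j k}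
             + card {(i, k). i < n \<and> k < n \<and> inout C i k}"

end

theory Submission
  imports Defs "HOL-Library.FuncSet"
begin

definition sd :: "'a set \<Rightarrow> 'a set \<Rightarrow> 'a set" where "sd A B = (A - B) \<union> (B - A)"

lemma card_sd_odd:
  assumes "finite A" "finite B"
  shows "odd (card (sd A B)) = (odd (card A) \<noteq> odd (card B))"
proof -
  have 1: "card A + card B = card (A \<union> B) + card (A \<inter> B)" using card_Un_Int assms by blast
  have e: "A \<union> B = sd A B \<union> (A \<inter> B)" unfolding sd_def by auto
  have d: "sd A B \<inter> (A \<inter> B) = {}" unfolding sd_def by auto
  have f: "finite (sd A B)" using assms unfolding sd_def by auto
  have 2: "card (A \<union> B) = card (sd A B) + card (A \<inter> B)"
    using card_Un_disjoint[OF f _ d] assms e by simp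
  from 1 2 show ?thesis by presburger
qed

lemma parity_xor:
  assumes "finite S"
  shows "parity S (\<lambda>i. x i \<noteq> y i) = (parity S x \<noteq> parity S y)"
proof -
  have "{i\<in>S. x i \<noteq> y i} = sd {i\<in>S. x i} {i\<in>S. y i}" unfolding sd_def by auto
  moreover have "finite {i\<in>S. x i}" "finite {i\<in>S. y i}" using assms by auto
  ultimately show ?thesis unfolding parity_def using card_sd_odd[of "{i\<in>S. x i}" "{i\<in>S. y i}"] by simp
qed

lemma parity_sd:
  assumes "finite S" "finite T"
  shows "parity (sd S T) x = (parity S x \<noteq> parity T x)"
proof -
  have "{i\<in>sd S T. x i} = sd {i\<in>S. x i} {i\<in>T. x i}" unfolding sd_def by auto
  moreover have "finite {i\<in>S. x i}" "finite {i\<in>T. x i}" using assms by auto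
  ultimately show ?thesis unfolding parity_def using card_sd_odd[of "{i\<in>S. x i}" "{i\<in>T. x i}"] by simp
qed

definition xs :: "('b \<Rightarrow> nat set) \<Rightarrow> 'b set \<Rightarrow> nat set" where
  "xs v M = {i. odd (card {t\<in>M. i \<in> v t})}"

lemma xs_insert:
  assumes "finite M" "t \<notin> M"
  shows "xs v (insert t M) = sd (xs v M) (v t)"
proof -
  have "card {s\<in>insert t M. i \<in> v s} = card {s\<in>M. i \<in> v s} + (if i \<in> v t then 1 else 0)" for i
  proof (cases "i \<in> v t")
    case True
    then have "{s\<in>insert t M. i \<in> v s} = insert t {s\<in>M. i \<in> v s}" by auto
    then show ?thesis using True assms by simp
  next
    case False
    then have "{s\<in>insert t M. i \<in> v s} = {s\<in>M. i \<in> v s}" by auto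
    then show ?thesis using False by simp
  qed
  then show ?thesis unfolding xs_def sd_def by auto
qed

lemma sd_sd: "sd (sd A B) B = A" unfolding sd_def by auto

lemma span_dual:
  assumes "finite I"
  shows "(\<forall>m\<in>I. finite (v m)) \<Longrightarrow> finite R \<Longrightarrow> (\<forall>M\<subseteq>I. R \<noteq> xs v M) \<Longrightarrow>
         \<exists>x. (\<forall>m\<in>I. \<not> parity (v m) x) \<and> parity R x"
  using assms
proof (induction I arbitrary: R rule: finite_induct)
  case empty
  then have "R \<noteq> {}" unfolding xs_def by auto
  then obtain i where i: "i \<in> R" by auto
  have "{j\<in>R. j = i} = {i}" using i by auto
  then have "parity R (\<lambda>j. j = i)" unfolding parity_def by simp
  then show ?case by auto
next
  case (insert t I)
  have fv: "finite (v t)" using insert by auto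
  have fsd: "finite (sd R (v t))" using fv insert(5) unfolding sd_def by auto
  have h1: "\<forall>M\<subseteq>I. R \<noteq> xs v M" using insert(6) by auto
  have h2: "\<forall>M\<subseteq>I. sd R (v t) \<noteq> xs v M"
  proof (intro allI impI)
    fix M assume M: "M \<subseteq> I"
    show "sd R (v t) \<noteq> xs v M"
    proof
      assume eq: "sd R (v t) = xs v M"
      have fM: "finite M" using M insert(1) finite_subset by auto
      have "t \<notin> M" using M insert(2) by auto
      then have "xs v (insert t M) = R" using xs_insert[OF fM] eq sd_sd by metis
      moreover have "insert t M \<subseteq> insert t I" using M by auto
      ultimately show False using insert(6) by blast
    qed
  qed
  have fI: "\<forall>m\<in>I. finite (v m)" using insert by auto
  obtain x1 where x1: "\<forall>m\<in>I. \<not> parity (v m) x1" "parity R x1"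
    using insert.IH[OF fI insert(5) h1] by blast
  obtain x2 where x2: "\<forall>m\<in>I. \<not> parity (v m) x2" "parity (sd R (v t)) x2"
    using insert.IH[OF fI fsd h2] by blast
  show ?case
  proof (cases "parity (v t) x1")
    case False
    then show ?thesis using x1 by auto
  next
    case T1: True
    show ?thesis
    proof (cases "parity (v t) x2")
      case False
      then have "parity R x2" using x2(2) parity_sd[OF insert(5) fv] by simp
      then show ?thesis using x2 False by auto
    next
      case True
      then have nR: "\<not> parity R x2" using x2(2) parity_sd[OF insert(5) fv] by simp
      have "\<forall>m\<in>insert t I. \<not> parity (v m) (\<lambda>i. x1 i \<noteq> x2 i)"
        using parity_xor insert(4) x1 x2 T1 True by auto
      moreover have "parity R (\<lambda>i. x1 i \<noteq> x2 i)"
        using parity_xor[OF insert(5)] x1 nR by simp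
      ultimately show ?thesis by blast
    qed
  qed
qed


definition dec :: "nat \<Rightarrow> nat \<Rightarrow> (nat\<times>nat\<times>nat) set \<Rightarrow> nat \<Rightarrow> nat set" where
 "dec n N X = restrict (\<lambda>k. {i. i<n \<and> odd ((if (2::nat,i,k)\<in>X then 1 else 0) + card {j. j<N \<and> (1::nat,j,k)\<in>X \<and> (0::nat,i,j)\<in>X})}) {..<n}"

lemma rows_decodable:
  assumes lm: "linear_middle n C" and cp: "computes n C A" and nN: "n \<le> N" and wN: "wires n C \<le> N"
  shows "\<exists>X. X \<subseteq> {..<3} \<times> {..<N} \<times> {..<N} \<and> card X \<le> wires n C \<and>
             dec n N X = restrict (\<lambda>k. {i. i < n \<and> A k i}) {..<n}"
proof -
  define m where "m = mid C"
  have "\<exists>S b. j < m \<longrightarrow> S \<subseteq> {i. i < n \<and> inmid C i j} \<and> (\<forall>x. midfun C j x = (b \<noteq> parity S x))" for j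
  proof (cases "j < m")
    case True
    then show ?thesis using lm unfolding linear_middle_def m_def by simp
  qed simp
  then have "\<forall>j. \<exists>S b. j < m \<longrightarrow> S \<subseteq> {i. i < n \<and> inmid C i j} \<and> (\<forall>x. midfun C j x = (b \<noteq> parity S x))" by blast
  from choice[OF this] obtain S where "\<forall>j. \<exists>b. j < m \<longrightarrow> S j \<subseteq> {i. i < n \<and> inmid C i j} \<and> (\<forall>x. midfun C j x = (b \<noteq> parity (S j) x))"
    by blast
  from choice[OF this] obtain b where Sb0: "\<forall>j. j < m \<longrightarrow> S j \<subseteq> {i. i < n \<and> inmid C i j} \<and> (\<forall>x. midfun C j x = (b j \<noteq> parity (S j) x))"
    by blast
  then have Sb: "\<And>j. j < m \<Longrightarrow> S j \<subseteq> {i. i < n \<and> inmid C i j} \<and> (\<forall>x. midfun C j x = (b j \<noteq> parity (S j) x))"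
    by blast
  have Sfin: "finite (S j)" if "j<m" for j
  proof -
    have "S j \<subseteq> {..<n}" using Sb[OF that] by auto
    then show ?thesis by (rule finite_subset) simp
  qed
  define v where "v = case_sum (\<lambda>i. {i}) S"
  define I where "I k = Inl ` {i. i<n \<and> inout C i k} \<union> Inr ` {j. j<m \<and> midout C j k}" for k
  have fI: "finite (I k)" for k unfolding I_def by auto
  have fv: "\<forall>t\<in>I k. finite (v t)" for k unfolding I_def v_def using Sfin by auto
  have p0: "parity Z (\<lambda>_. False) = False" for Z unfolding parity_def by simp
  have ol: "outputs_local n C" using cp computes_def by auto
  have span: "\<exists>M \<subseteq> I k. {i. i<n \<and> A k i} = xs v M" if k: "k < n" for k
  proof (rule ccontr)
    assume nex: "\<not> (\<exists>M \<subseteq> I k. {i. i<n \<and> A k i} = xs v M)"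
    have fR: "finite {i. i<n \<and> A k i}" by auto
    obtain x where x: "\<forall>t\<in>I k. \<not> parity (v t) x" "parity {i. i<n \<and> A k i} x"
      using span_dual[OF fI fv fR] nex by blast
    define x0 where "x0 = (\<lambda>_::nat. False)"
    have eq: "outfun C k x (\<lambda>j. midfun C j x) = outfun C k x0 (\<lambda>j. midfun C j x0)"
    proof (rule ol[unfolded outputs_local_def, rule_format, OF k])
      fix i assume i: "i < n" "inout C i k"
      then have "Inl i \<in> I k" unfolding I_def by auto
      then have "\<not> parity {i} x" using x(1) unfolding v_def by auto
      moreover have "{j\<in>{i}. x j} = (if x i then {i} else {})" by auto
      ultimately show "x i = x0 i" unfolding parity_def x0_def by (auto split: if_splits)
    next
      fix j assume j: "j < mid C" "midout C j k"
      then have "Inr j \<in> I k" unfolding I_def m_def by auto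
      then have "\<not> parity (S j) x" using x(1) unfolding v_def by auto
      then show "midfun C j x = midfun C j x0" using Sb[of j] j p0 unfolding m_def x0_def by auto
    qed
    have c: "\<forall>x. \<forall>k < n. outfun C k x (\<lambda>j. midfun C j x) = matvec n A x k"
      using cp computes_def by auto
    show False using c[rule_format, OF k, of x] c[rule_format, OF k, of x0] eq x(2) p0
      unfolding matvec_def x0_def by auto
  qed
  then have "\<forall>k. \<exists>M. k<n \<longrightarrow> M \<subseteq> I k \<and> {i. i<n \<and> A k i} = xs v M" by blast
  from choice[OF this] obtain Mf where Mf0: "\<forall>k. k<n \<longrightarrow> Mf k \<subseteq> I k \<and> {i. i<n \<and> A k i} = xs v (Mf k)"
    by blast
  then have Mf: "\<And>k. k<n \<Longrightarrow> Mf k \<subseteq> I k \<and> {i. i<n \<and> A k i} = xs v (Mf k)" by blast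
  define J where "J = {j. j<m \<and> (\<exists>k<n. midout C j k)}"
  define E1 where "E1 = {(i, j). i < n \<and> j < m \<and> inmid C i j}"
  define E2 where "E2 = {(j, k). j < m \<and> k < n \<and> midout C j k}"
  define E3 where "E3 = {(i, k). i < n \<and> k < n \<and> inout C i k}"
  have wires: "wires n C = card E1 + card E2 + card E3"
    unfolding wires_def E1_def E2_def E3_def m_def by simp
  have fE1: "finite E1" unfolding E1_def by (rule finite_subset[of _ "{..<n} \<times> {..<m}"]) auto
  have fE2: "finite E2" unfolding E2_def by (rule finite_subset[of _ "{..<m} \<times> {..<n}"]) auto
  have fE3: "finite E3" unfolding E3_def by (rule finite_subset[of _ "{..<n} \<times> {..<n}"]) auto
  have "J = fst ` E2" unfolding J_def E2_def by (auto simp: image_iff) blast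
  then have cJ: "card J \<le> N" using card_image_le[OF fE2, of fst] wires wN by simp
  have fJ: "finite J" unfolding J_def by auto
  obtain h where h: "bij_betw h J {0..<card J}" using ex_bij_betw_finite_nat[OF fJ] by blast
  have hinj: "inj_on h J" using h by (rule bij_betw_imp_inj_on)
  have hN: "h j < N" if "j \<in> J" for j
  proof -
    have "h j \<in> {0..<card J}" using h that unfolding bij_betw_def by blast
    then show ?thesis using cJ by simp
  qed
  define P1 where "P1 = {(i,j). j\<in>J \<and> i \<in> S j}"
  define P2 where "P2 = {(j,k). k<n \<and> Inr j \<in> Mf k}"
  define P3 where "P3 = {(i,k). k<n \<and> Inl i \<in> Mf k}"
  have P1E: "P1 \<subseteq> E1" unfolding P1_def E1_def J_def using Sb by auto
  have P2E: "P2 \<subseteq> E2" unfolding P2_def E2_def using Mf unfolding I_def by auto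
  have P3E: "P3 \<subseteq> E3" unfolding P3_def E3_def using Mf unfolding I_def by auto
  define X where "X = (\<lambda>(i,j). (0::nat, i, h j)) ` P1 \<union> (\<lambda>(j,k). (1::nat, h j, k)) ` P2
     \<union> (\<lambda>(i,k). (2::nat,i,k)) ` P3"
  have P2J: "j \<in> J" if "(j,k) \<in> P2" for j k
    using that Mf unfolding P2_def I_def J_def by auto
  have "card X \<le> card ((\<lambda>(i,j). (0::nat, i, h j)) ` P1) + card ((\<lambda>(j,k). (1::nat, h j, k)) ` P2)
     + card ((\<lambda>(i,k). (2::nat,i,k)) ` P3)"
    unfolding X_def by (meson add_le_mono card_Un_le le_refl order_trans)
  also have "\<dots> \<le> card P1 + card P2 + card P3"
    by (intro add_le_mono card_image_le finite_subset[OF P1E fE1] finite_subset[OF P2E fE2] finite_subset[OF P3E fE3])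
  also have "\<dots> \<le> card E1 + card E2 + card E3"
    by (intro add_le_mono card_mono) (use P1E P2E P3E fE1 fE2 fE3 in auto)
  finally have cX: "card X \<le> wires n C" using wires by simp
  have XU: "X \<subseteq> {..<3} \<times> {..<N} \<times> {..<N}"
  proof -
    have "(\<lambda>(i,j). (0::nat, i, h j)) ` P1 \<subseteq> {..<3} \<times> {..<N} \<times> {..<N}"
      using nN hN Sb unfolding P1_def by (fastforce simp: J_def)
    moreover have "(\<lambda>(j,k). (1::nat, h j, k)) ` P2 \<subseteq> {..<3} \<times> {..<N} \<times> {..<N}"
      using P2J nN hN unfolding P2_def by auto
    moreover have "(\<lambda>(i,k). (2::nat,i,k)) ` P3 \<subseteq> {..<3} \<times> {..<N} \<times> {..<N}"
      using P3E nN unfolding P3_def E3_def by auto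
    ultimately show ?thesis unfolding X_def by blast
  qed
  have rowk: "{i. i<n \<and> odd ((if (2::nat,i,k)\<in>X then 1 else 0) + card {j. j<N \<and> (1::nat,j,k)\<in>X \<and> (0::nat,i,j)\<in>X})}
      = {i. i<n \<and> A k i}" if k: "k < n" for k
  proof -
    have MI: "Mf k \<subseteq> I k" and Rk: "{i. i<n \<and> A k i} = xs v (Mf k)" using Mf[OF k] by auto
    have fM: "finite (Mf k)" using MI fI finite_subset by auto
    have "i < n \<Longrightarrow> (A k i \<longleftrightarrow> odd ((if (2::nat,i,k)\<in>X then 1 else 0) + card {j. j<N \<and> (1::nat,j,k)\<in>X \<and> (0::nat,i,j)\<in>X}))" for i
    proof -
      assume i: "i < n"
      have Ai: "A k i \<longleftrightarrow> odd (card {t\<in>Mf k. i \<in> v t})"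
        using Rk i unfolding xs_def by blast
      have x2: "(2::nat,i,k)\<in>X \<longleftrightarrow> Inl i \<in> Mf k" unfolding X_def P3_def using k by auto
      define B where "B = {j. Inr j \<in> Mf k \<and> i \<in> S j}"
      have BJ: "B \<subseteq> J" unfolding B_def using P2J k unfolding P2_def by auto
      have x1: "{j. j<N \<and> (1::nat,j,k)\<in>X \<and> (0::nat,i,j)\<in>X} = h ` B"
      proof
        show "h ` B \<subseteq> {j. j<N \<and> (1::nat,j,k)\<in>X \<and> (0::nat,i,j)\<in>X}"
        proof
          fix y assume "y \<in> h ` B"
          then obtain j where j: "j \<in> B" "y = h j" by auto
          have "j \<in> J" using j BJ by auto
          moreover have "(j,k) \<in> P2" using j k unfolding B_def P2_def by auto
          moreover have "(i,j) \<in> P1" using j \<open>j\<in>J\<close> unfolding B_def P1_def by auto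
          ultimately have a: "(1::nat, h j, k) \<in> X" "(0::nat, i, h j) \<in> X"
            unfolding X_def by (force intro: image_eqI[of _ _ "(j,k)"], force intro: image_eqI[of _ _ "(i,j)"])
          show "y \<in> {j. j<N \<and> (1::nat,j,k)\<in>X \<and> (0::nat,i,j)\<in>X}"
            using a j hN[OF \<open>j\<in>J\<close>] by blast
        qed
      next
        show "{j. j<N \<and> (1::nat,j,k)\<in>X \<and> (0::nat,i,j)\<in>X} \<subseteq> h ` B"
        proof
          fix y assume y: "y \<in> {j. j<N \<and> (1::nat,j,k)\<in>X \<and> (0::nat,i,j)\<in>X}"
          then obtain j1 where j1: "(j1,k) \<in> P2" "y = h j1" unfolding X_def by auto
          from y obtain j2 where j2: "(i,j2) \<in> P1" "y = h j2" unfolding X_def by auto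
          have "j1 \<in> J" "j2 \<in> J" using P2J j1 j2 unfolding P1_def by auto
          then have "j1 = j2" using hinj j1(2) j2(2) unfolding inj_on_def by auto
          then have "j1 \<in> B" using j1 j2 unfolding B_def P1_def P2_def by auto
          then show "y \<in> h ` B" using j1 by auto
        qed
      qed
      have cB: "card (h ` B) = card B" using card_image inj_on_subset[OF hinj BJ] by blast
      have split: "{t\<in>Mf k. i \<in> v t} = (if Inl i \<in> Mf k then {Inl i} else {}) \<union> Inr ` B"
      proof (rule set_eqI)
        fix t show "t \<in> {t\<in>Mf k. i \<in> v t} \<longleftrightarrow> t \<in> (if Inl i \<in> Mf k then {Inl i} else {}) \<union> Inr ` B"
          unfolding B_def v_def by (cases t) auto
      qed
      have fB: "finite B" using BJ fJ finite_subset by auto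
      have "card {t\<in>Mf k. i \<in> v t} = (if Inl i \<in> Mf k then 1 else 0) + card B"
        unfolding split using fB by (auto simp: card_image card_insert_if)
      then show ?thesis using Ai x1 x2 cB by simp
    qed
    then show ?thesis by auto
  qed
  have "dec n N X = restrict (\<lambda>k. {i. i < n \<and> A k i}) {..<n}"
    unfolding dec_def using rowk by (intro ext) auto
  then show ?thesis using XU cX by blast
qed


lemma count_subsets:
  assumes "finite U" "card U \<ge> 1"
  shows "card {X. X \<subseteq> U \<and> card X \<le> K} \<le> (K+1) * card U ^ K"
proof -
  have e: "{X. X \<subseteq> U \<and> card X \<le> K} = (\<Union>k\<in>{..K}. {X. X \<subseteq> U \<and> card X = k})" by auto
  have "card {X. X \<subseteq> U \<and> card X \<le> K} \<le> (\<Sum>k\<in>{..K}. card {X. X \<subseteq> U \<and> card X = k})"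
    unfolding e by (rule card_UN_le) simp
  also have "\<dots> = (\<Sum>k\<in>{..K}. card U choose k)" using n_subsets[OF assms(1)] by simp
  also have "\<dots> \<le> (\<Sum>k\<in>{..K}. card U ^ K)"
  proof (rule sum_mono)
    fix k assume k: "k \<in> {..K}"
    have "card U choose k \<le> card U ^ k"
      by (cases "k \<le> card U") (auto simp: binomial_le_pow binomial_eq_0)
    also have "\<dots> \<le> card U ^ K" using k assms(2) by (intro power_increasing) auto
    finally show "card U choose k \<le> card U ^ K" .
  qed
  also have "\<dots> = (K+1) * card U ^ K" by simp
  finally show ?thesis .
qed

lemma numeric:
  fixes n K :: nat
  assumes n2: "2 \<le> n" and Ky: "real K \<le> 1/8 * real n ^ 2 / log 2 (real n)"
  shows "(K+1) * (3*(n*n)*(n*n))^K < 2^(n*n)"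
proof -
  have lg: "1 \<le> log 2 (real n)" using n2 by simp
  have "K + 1 \<le> 2^K" by (induction K) auto
  also have "(2::nat)^K \<le> n^K" using n2 by (intro power_mono) auto
  finally have a: "K+1 \<le> n^K" .
  have "3*(n*n)*(n*n) \<le> n*n*(n*n)*(n*n)"
  proof -
    have "3 \<le> n*n" using n2 mult_le_mono[OF n2 n2] by simp
    then show ?thesis by simp
  qed
  also have "\<dots> = n^6" by (simp add: power_def eval_nat_numeral algebra_simps)
  finally have b: "(3*(n*n)*(n*n))^K \<le> (n^6)^K" by (intro power_mono) auto
  have "(K+1) * (3*(n*n)*(n*n))^K \<le> n^K * (n^6)^K" using a b by (intro mult_le_mono)
  also have "\<dots> = n^(7*K)" by (simp add: power_mult[symmetric] power_add[symmetric])
  finally have c: "(K+1) * (3*(n*n)*(n*n))^K \<le> n^(7*K)" .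
  have "real (n^(7*K)) = 2 powr (log 2 (real n) * real (7*K))"
  proof -
    have "real (n^(7*K)) = real n powr real (7*K)" using n2 by (subst powr_realpow) auto
    also have "\<dots> = (2 powr log 2 (real n)) powr real (7*K)" using n2 by simp
    also have "\<dots> = 2 powr (log 2 (real n) * real (7*K))" by (simp add: powr_powr)
    finally show ?thesis .
  qed
  also have "\<dots> < 2 powr (real (n*n))"
  proof (rule powr_less_mono)
    have "log 2 (real n) * real (7*K) = 7 * (real K * log 2 (real n))" by simp
    also have "\<dots> \<le> 7 * (1/8 * real n ^ 2)"
    proof -
      have "real K * log 2 (real n) \<le> 1/8 * real n ^ 2 / log 2 (real n) * log 2 (real n)"
        using Ky lg by (intro mult_right_mono) auto
      also have "\<dots> = 1/8 * real n ^ 2" using lg by simp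
      finally show ?thesis by simp
    qed
    also have "\<dots> < real (n*n)" using n2 by (simp add: power2_eq_square)
    finally show "log 2 (real n) * real (7*K) < real (n*n)" .
  qed simp
  also have "\<dots> = real (2^(n*n))" using powr_realpow[of "2::real" "n*n"] by simp
  finally have "n^(7*K) < 2^(n*n)" by linarith
  with c show ?thesis by linarith
qed

theorem theorem3:
  shows "\<exists>c::real. c > 0 \<and> (\<forall>n::nat. n \<ge> 2 \<longrightarrow>
           (\<exists>A :: nat \<Rightarrow> nat \<Rightarrow> bool. \<forall>C :: d2circ.
              linear_middle n C \<and> computes n C A \<longrightarrow>
              real (wires n C) \<ge> c * real n ^ 2 / log 2 (real n)))"
proof (rule exI[of _ "1/8"], intro conjI allI impI)
  show "(0::real) < 1/8" by simp
  fix n :: nat assume n2: "2 \<le> n"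
  define y where "y = 1/8 * real n ^ 2 / log 2 (real n)"
  define K where "K = nat \<lfloor>y\<rfloor>"
  define N where "N = n * n"
  define U where "U = {..<(3::nat)} \<times> {..<N} \<times> {..<N}"
  define T where "T = {X. X \<subseteq> U \<and> card X \<le> K}"
  define Mset where "Mset = PiE {..<n} (\<lambda>_. Pow {..<n})"
  have lg: "1 \<le> log 2 (real n)" using n2 by simp
  have y0: "0 \<le> y" unfolding y_def using lg by simp
  have Ky: "real K \<le> y" unfolding K_def using y0 by linarith
  have yle: "y \<le> 1/8 * real n ^ 2"
  proof -
    have "1/8 * real n ^ 2 / log 2 (real n) \<le> 1/8 * real n ^ 2 / 1"
      using lg by (intro divide_left_mono) auto
    then show ?thesis unfolding y_def by simp
  qed
  have "real K \<le> real N" using Ky yle unfolding N_def by (simp add: power2_eq_square)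
  then have KN: "K \<le> N" by simp
  have nN: "n \<le> N" unfolding N_def using n2 by simp
  have fU: "finite U" unfolding U_def by simp
  have cU: "card U = 3*(n*n)*(n*n)" unfolding U_def N_def by (simp add: card_cartesian_product)
  have cU1: "card U \<ge> 1" using cU n2 by simp
  have fT: "finite T" unfolding T_def using fU by simp
  have "card T \<le> (K+1) * card U ^ K" unfolding T_def by (rule count_subsets[OF fU cU1])
  also have "\<dots> < 2^(n*n)" unfolding cU using numeric[OF n2] Ky unfolding y_def by simp
  finally have cT: "card T < 2^(n*n)" .
  have cM: "card Mset = 2^(n*n)" unfolding Mset_def by (simp add: card_PiE card_Pow power_mult)
  have "\<not> Mset \<subseteq> dec n N ` T"
  proof
    assume "Mset \<subseteq> dec n N ` T"
    then have "card Mset \<le> card (dec n N ` T)" using fT by (intro card_mono) auto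
    also have "\<dots> \<le> card T" using fT by (rule card_image_le)
    finally show False using cT cM by simp
  qed
  then obtain R where R: "R \<in> Mset" "R \<notin> dec n N ` T" by blast
  define A where "A k i = (i \<in> R k)" for k i
  have rowsA: "restrict (\<lambda>k. {i. i < n \<and> A k i}) {..<n} = R"
  proof (rule ext)
    fix k show "restrict (\<lambda>k. {i. i < n \<and> A k i}) {..<n} k = R k"
    proof (cases "k < n")
      case True
      then have "R k \<subseteq> {..<n}" using R(1) unfolding Mset_def by (auto simp: PiE_iff)
      then show ?thesis using True unfolding A_def by auto
    next
      case False
      then show ?thesis using R(1) unfolding Mset_def by (auto simp: PiE_iff extensional_def)
    qed
  qed
  show "\<exists>A. \<forall>C. linear_middle n C \<and> computes n C A \<longrightarrow>
              1/8 * real n ^ 2 / log 2 (real n) \<le> real (wires n C)"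
  proof (rule exI[of _ A], intro allI impI)
    fix C assume C: "linear_middle n C \<and> computes n C A"
    show "1/8 * real n ^ 2 / log 2 (real n) \<le> real (wires n C)"
    proof (rule ccontr)
      assume "\<not> ?thesis"
      then have Wy: "real (wires n C) \<le> y" unfolding y_def by simp
      then have "int (wires n C) \<le> \<lfloor>y\<rfloor>" by (simp add: le_floor_iff)
      then have WK: "wires n C \<le> K" unfolding K_def by linarith
      then have WN: "wires n C \<le> N" using KN by simp
      obtain X where X: "X \<subseteq> {..<3} \<times> {..<N} \<times> {..<N}" "card X \<le> wires n C"
          "dec n N X = restrict (\<lambda>k. {i. i < n \<and> A k i}) {..<n}"
        using rows_decodable[OF _ _ nN WN] C by blast
      have "X \<in> T" unfolding T_def U_def using X WK by simp
      then show False using X(3) rowsA R(2) by auto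
    qed
  qed
qed

end
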